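(* Let $k\ge 2$, let $G$ be any finite simple graph, and let $H$ be a finite simple graph admitting a closed neighborhood balanced $k$-coloring $c$ with $|c^{-1}(1)|=|c^{-1}(2)|=\dots=|c^{-1}(k)|$. Then the lexicographic product $G[H]$ admits a closed neighborhood balanced $k$-coloring.
   Context: For a vertex $v$, $N[v]=\{v\}\cup\{u : uv\in E\}$. A closed neighborhood balanced $k$-coloring of a graph is a map $c: V\to\{1,\dots,k\}$ such that for every vertex $v$ the numbers $|\{u\in N[v] : c(u)=i\}|$, $i=1,\dots,k$, are all equal. The lexicographic product $G[H]$ has vertex set $V(G)\times V(H)$, with $(g,h)$ adjacent to $(g',h')$ iff $gg'\in E(G)$, or $g=g'$ and $hh'\in E(H)$. *)

theory Defs
  imports Main
begin

definition simple_graph :: "'a set \<Rightarrow> ('a \<Rightarrow> 'a \<Rightarrow> bool) \<Rightarrow> bool" where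
  "simple_graph V E \<longleftrightarrow> finite V \<and> (\<forall>u v. E u v \<longrightarrow> u \<in> V \<and> v \<in> V)
     \<and> (\<forall>u v. E u v \<longrightarrow> E v u) \<and> (\<forall>v. \<not> E v v)"

definition closed_nbhd :: "'a set \<Rightarrow> ('a \<Rightarrow> 'a \<Rightarrow> bool) \<Rightarrow> 'a \<Rightarrow> 'a set" where
  "closed_nbhd V E v = {v} \<union> {u \<in> V. E u v}"

definition cnb_coloring :: "'a set \<Rightarrow> ('a \<Rightarrow> 'a \<Rightarrow> bool) \<Rightarrow> nat \<Rightarrow> ('a \<Rightarrow> nat) \<Rightarrow> bool" where
  "cnb_coloring V E k c \<longleftrightarrow> (\<forall>v\<in>V. c v \<in> {1..k}) \<and>
     (\<forall>v\<in>V. \<forall>i\<in>{1..k}. \<forall>j\<in>{1..k}.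
        card {u \<in> closed_nbhd V E v. c u = i} = card {u \<in> closed_nbhd V E v. c u = j})"

definition lex_vertices :: "'a set \<Rightarrow> 'b set \<Rightarrow> ('a \<times> 'b) set" where
  "lex_vertices VG VH = VG \<times> VH"

definition lex_edges :: "'a set \<Rightarrow> ('a \<Rightarrow> 'a \<Rightarrow> bool) \<Rightarrow> 'b set \<Rightarrow> ('b \<Rightarrow> 'b \<Rightarrow> bool)
    \<Rightarrow> ('a \<times> 'b) \<Rightarrow> ('a \<times> 'b) \<Rightarrow> bool" where
  "lex_edges VG EG VH EH x y \<longleftrightarrow> x \<in> VG \<times> VH \<and> y \<in> VG \<times> VH \<and>
     (EG (fst x) (fst y) \<or> (fst x = fst y \<and> EH (snd x) (snd y)))"

end

theory Submission
  imports Defs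
begin

lemma count_eq:
  assumes G: "simple_graph VG EG" and H: "simple_graph VH EH"
    and g: "g \<in> VG" and h: "h \<in> VH"
  shows "card {u \<in> closed_nbhd (lex_vertices VG VH) (lex_edges VG EG VH EH) (g,h). c (snd u) = i}
       = card {u \<in> closed_nbhd VH EH h. c u = i} + card {g' \<in> VG. EG g' g} * card {v \<in> VH. c v = i}"
proof -
  let ?A = "Pair g ` {u \<in> closed_nbhd VH EH h. c u = i}"
  let ?B = "{g' \<in> VG. EG g' g} \<times> {v \<in> VH. c v = i}"
  have fG: "finite VG" and fH: "finite VH" using G H by (auto simp: simple_graph_def)
  have irr: "\<not> EG g g" using G by (auto simp: simple_graph_def)
  have eq: "{u \<in> closed_nbhd (lex_vertices VG VH) (lex_edges VG EG VH EH) (g,h). c (snd u) = i} = ?A \<union> ?B"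
  proof (rule set_eqI)
    fix u :: "'a \<times> 'b"
    obtain a b where u: "u = (a,b)" by (cases u)
    have sG: "EG x y \<Longrightarrow> x \<in> VG" for x y using G by (simp add: simple_graph_def)
    have sH: "EH x y \<Longrightarrow> x \<in> VH" for x y using H by (simp add: simple_graph_def)
    show "u \<in> {u \<in> closed_nbhd (lex_vertices VG VH) (lex_edges VG EG VH EH) (g,h). c (snd u) = i} \<longleftrightarrow> u \<in> ?A \<union> ?B"
      unfolding u closed_nbhd_def lex_vertices_def lex_edges_def
      using g h irr sG sH by (auto simp: image_iff)
  qed
  have dis: "?A \<inter> ?B = {}" using irr by auto
  have fA: "finite {u \<in> closed_nbhd VH EH h. c u = i}"
    using fH by (auto simp: closed_nbhd_def)
  have fB: "finite ?B" using fG fH by auto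
  have "card (?A \<union> ?B) = card ?A + card ?B"
    using card_Un_disjoint[OF finite_imageI[OF fA] fB dis] .
  moreover have "card ?A = card {u \<in> closed_nbhd VH EH h. c u = i}"
    by (rule card_image) (auto simp: inj_on_def)
  moreover have "card ?B = card {g' \<in> VG. EG g' g} * card {v \<in> VH. c v = i}"
    by (rule card_cartesian_product)
  ultimately show ?thesis using eq by simp
qed

theorem theorem2p20:
  fixes VG :: "'a set" and EG :: "'a \<Rightarrow> 'a \<Rightarrow> bool"
    and VH :: "'b set" and EH :: "'b \<Rightarrow> 'b \<Rightarrow> bool"
    and k :: nat and c :: "'b \<Rightarrow> nat"
  assumes "k \<ge> 2"
    and "simple_graph VG EG"
    and "simple_graph VH EH"
    and "cnb_coloring VH EH k c"
    and "\<forall>i\<in>{1..k}. \<forall>j\<in>{1..k}. card {v \<in> VH. c v = i} = card {v \<in> VH. c v = j}"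
  shows "\<exists>c'. cnb_coloring (lex_vertices VG VH) (lex_edges VG EG VH EH) k c'"
proof
  show "cnb_coloring (lex_vertices VG VH) (lex_edges VG EG VH EH) k (\<lambda>u. c (snd u))"
    unfolding cnb_coloring_def
  proof (intro conjI ballI)
    fix v assume "v \<in> lex_vertices VG VH"
    then have "snd v \<in> VH" by (auto simp: lex_vertices_def)
    then show "c (snd v) \<in> {1..k}" using assms(4)
      unfolding cnb_coloring_def by blast
  next
    fix v i j assume v: "v \<in> lex_vertices VG VH" and i: "i \<in> {1..k}" and j: "j \<in> {1..k}"
    obtain g h where gh: "v = (g,h)" "g \<in> VG" "h \<in> VH" using v by (auto simp: lex_vertices_def)
    have 1: "card {u \<in> closed_nbhd VH EH h. c u = i} = card {u \<in> closed_nbhd VH EH h. c u = j}"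
      using assms(4) gh(3) i j unfolding cnb_coloring_def by blast
    have 2: "card {v \<in> VH. c v = i} = card {v \<in> VH. c v = j}" using assms(5) i j by blast
    show "card {u \<in> closed_nbhd (lex_vertices VG VH) (lex_edges VG EG VH EH) v. c (snd u) = i} =
          card {u \<in> closed_nbhd (lex_vertices VG VH) (lex_edges VG EG VH EH) v. c (snd u) = j}"
      unfolding gh(1)
      unfolding count_eq[OF assms(2,3) gh(2,3), of c i] count_eq[OF assms(2,3) gh(2,3), of c j] 1 2
      by (rule refl)
  qed
qed

end
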